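(* Let $\pi:\Gamma\to\Gamma_0$ be a surjective group homomorphism, $\mathcal H$ a Hilbert space and $\mu:\Gamma_0\to U(\mathcal H)$ a map with $\mu(e)=\mathrm{Id}$. Then (1) $\mathrm{def}(\mu)=\mathrm{def}(\mu\circ\pi)$, and (2) $\min(D(\mu\circ\pi),\sqrt3)=\min(D(\mu),\sqrt3)$.
   Context: For maps $\mu,\nu:\Gamma\to U(\mathcal H)$ put $\|\mu-\nu\|=\sup_\gamma\|\mu(\gamma)-\nu(\gamma)\|$ (operator norm), $D(\mu)=\inf\{\|\mu-\nu\|:\nu\in\mathrm{Hom}(\Gamma,U(\mathcal H))\}$ and $\mathrm{def}(\mu)=\sup_{x,y\in\Gamma}\|\mu(xy)-\mu(x)\mu(y)\|$. *)

theory Defs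
  imports "HOL-Analysis.Analysis" "HOL-Algebra.Group"
begin

text \<open>A complex Hilbert space is modelled as a real Hilbert space (type class
  real_inner + complete_space) together with a complex structure J
  (multiplication by the imaginary unit): a real-linear map with J (J x) = -x
  that preserves the real inner product. The complex inner product is then
  recovered as inner x y + i * inner x (J y) (up to convention).\<close>

definition complex_structure :: "('h::real_inner \<Rightarrow> 'h) \<Rightarrow> bool" where
  "complex_structure J \<longleftrightarrow> linear J \<and> (\<forall>x. J (J x) = - x) \<and>
     (\<forall>x y. inner (J x) (J y) = inner x y)"

text \<open>Unitary operators on the complex Hilbert space (H, J): complex-linear
  (real-linear and commuting with J), surjective isometries.\<close>

definition unitary_op :: "('h::real_inner \<Rightarrow> 'h) \<Rightarrow> ('h \<Rightarrow> 'h) \<Rightarrow> bool" where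
  "unitary_op J U \<longleftrightarrow> linear U \<and> (\<forall>x. U (J x) = J (U x)) \<and> surj U \<and>
     (\<forall>x. norm (U x) = norm x)"

definition unitary_hom :: "('g, 'm) monoid_scheme \<Rightarrow> ('h::real_inner \<Rightarrow> 'h)
    \<Rightarrow> ('g \<Rightarrow> 'h \<Rightarrow> 'h) \<Rightarrow> bool" where
  "unitary_hom G J \<nu> \<longleftrightarrow> (\<forall>x\<in>carrier G. unitary_op J (\<nu> x)) \<and>
     (\<forall>x\<in>carrier G. \<forall>y\<in>carrier G. \<nu> (x \<otimes>\<^bsub>G\<^esub> y) = \<nu> x \<circ> \<nu> y)"

definition map_dist :: "('g, 'm) monoid_scheme \<Rightarrow> ('g \<Rightarrow> 'h::real_normed_vector \<Rightarrow> 'h)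
    \<Rightarrow> ('g \<Rightarrow> 'h \<Rightarrow> 'h) \<Rightarrow> real" where
  "map_dist G \<mu> \<nu> = (SUP x\<in>carrier G. onorm (\<lambda>v. \<mu> x v - \<nu> x v))"

definition hom_dist :: "('g, 'm) monoid_scheme \<Rightarrow> ('h::real_inner \<Rightarrow> 'h)
    \<Rightarrow> ('g \<Rightarrow> 'h \<Rightarrow> 'h) \<Rightarrow> real" where
  "hom_dist G J \<mu> = Inf {map_dist G \<mu> \<nu> | \<nu>. unitary_hom G J \<nu>}"

definition defect :: "('g, 'm) monoid_scheme \<Rightarrow> ('g \<Rightarrow> 'h::real_normed_vector \<Rightarrow> 'h) \<Rightarrow> real" where
  "defect G \<mu> = (SUP p\<in>carrier G \<times> carrier G.
      onorm (\<lambda>v. \<mu> (fst p \<otimes>\<^bsub>G\<^esub> snd p) v - \<mu> (fst p) (\<mu> (snd p) v)))"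

end

theory Submission
  imports Defs
begin

lemma unitary_bl:
  assumes "unitary_op J U" shows "bounded_linear U"
proof -
  have l: "linear U" and n: "\<And>x. norm (U x) = norm x" using assms unfolding unitary_op_def by auto
  show ?thesis
    by (rule bounded_linear_intro[where K=1]) (simp_all add: linear_add[OF l] linear_scale[OF l] n)
qed

lemma diff_onorm:
  assumes "unitary_op J U" "unitary_op J V"
  shows "bounded_linear (\<lambda>v. U v - V v) \<and> 0 \<le> onorm (\<lambda>v. U v - V v) \<and> onorm (\<lambda>v. U v - V v) \<le> 2"
proof -
  have bl: "bounded_linear (\<lambda>v. U v - V v)"
    using unitary_bl[OF assms(1)] unitary_bl[OF assms(2)] by (rule bounded_linear_sub)
  have nU: "\<And>x. norm (U x) = norm x" and nV: "\<And>x. norm (V x) = norm x"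
    using assms unfolding unitary_op_def by auto
  have "onorm (\<lambda>v. U v - V v) \<le> 2"
  proof (rule onorm_bound)
    fix x show "norm (U x - V x) \<le> 2 * norm x"
      using norm_triangle_ineq4[of "U x" "V x"] nU nV by simp
  qed simp
  then show ?thesis using bl onorm_pos_le[OF bl] by simp
qed

lemma md_facts:
  assumes "group G" "\<forall>x\<in>carrier G. unitary_op J (\<mu> x)" "\<forall>x\<in>carrier G. unitary_op J (\<nu> x)"
  shows "bdd_above ((\<lambda>x. onorm (\<lambda>v. \<mu> x v - \<nu> x v)) ` carrier G)"
    and "0 \<le> map_dist G \<mu> \<nu>"
    and "\<And>x. x \<in> carrier G \<Longrightarrow> onorm (\<lambda>v. \<mu> x v - \<nu> x v) \<le> map_dist G \<mu> \<nu>"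
proof -
  show b: "bdd_above ((\<lambda>x. onorm (\<lambda>v. \<mu> x v - \<nu> x v)) ` carrier G)"
    using assms diff_onorm by (intro bdd_aboveI[where M=2]) fastforce
  show le: "\<And>x. x \<in> carrier G \<Longrightarrow> onorm (\<lambda>v. \<mu> x v - \<nu> x v) \<le> map_dist G \<mu> \<nu>"
    unfolding map_dist_def using b by (rule cSUP_upper2) auto
  have "\<one>\<^bsub>G\<^esub> \<in> carrier G" using assms(1) by (simp add: group.is_monoid monoid.one_closed)
  then show "0 \<le> map_dist G \<mu> \<nu>"
  proof -
    assume o: "\<one>\<^bsub>G\<^esub> \<in> carrier G"
    have "0 \<le> onorm (\<lambda>v. \<mu> \<one>\<^bsub>G\<^esub> v - \<nu> \<one>\<^bsub>G\<^esub> v)"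
      using diff_onorm o assms(2,3) by blast
    then show ?thesis using le[OF o] by linarith
  qed
qed

lemma double_step:
  fixes T :: "'h::real_inner \<Rightarrow> 'h"
  assumes l: "linear T" and n: "\<And>x. norm (T x) = norm x"
    and b: "\<And>y. norm (T y - y) \<le> d * norm y" and d0: "0 \<le> d"
  shows "(4 - d\<^sup>2) * (norm (T v - v))\<^sup>2 \<le> (norm (T (T v) - v))\<^sup>2"
proof -
  define y where "y = T v - v"
  have e: "T (T v) - v = T y + y" unfolding y_def by (simp add: linear_diff[OF l])
  have par: "(norm (T y + y))\<^sup>2 + (norm (T y - y))\<^sup>2 = 4 * (norm y)\<^sup>2"
  proof -
    have "(norm (T y + y))\<^sup>2 + (norm (T y - y))\<^sup>2 = 2 * (norm (T y))\<^sup>2 + 2 * (norm y)\<^sup>2"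
      by (simp add: power2_norm_eq_inner inner_add_left inner_add_right inner_diff_left inner_diff_right inner_commute)
    then show ?thesis using n[of y] by simp
  qed
  have "(norm (T y - y))\<^sup>2 \<le> (d * norm y)\<^sup>2"
    using b[of y] by (simp add: power_mono)
  then have "(norm (T y - y))\<^sup>2 \<le> d\<^sup>2 * (norm y)\<^sup>2" by (simp add: power_mult_distrib)
  then have "(4 - d\<^sup>2) * (norm y)\<^sup>2 \<le> (norm (T (T v) - v))\<^sup>2" using par e by (simp add: algebra_simps)
  then show ?thesis unfolding y_def .
qed

lemma kill:
  fixes \<nu> :: "'g \<Rightarrow> 'h::real_inner \<Rightarrow> 'h"
  assumes un: "\<forall>x\<in>K. linear (\<nu> x) \<and> (\<forall>v. norm (\<nu> x v) = norm v)"
    and cl: "\<And>g. g \<in> K \<Longrightarrow> m g g \<in> K \<and> \<nu> (m g g) = \<nu> g \<circ> \<nu> g"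
    and b: "\<And>g v. g \<in> K \<Longrightarrow> norm (\<nu> g v - v) \<le> d * norm v"
    and d0: "0 \<le> d" and d3: "d < sqrt 3" and gK: "g \<in> K"
  shows "\<nu> g = id"
proof -
  define c where "c = 4 - d\<^sup>2"
  have "d\<^sup>2 < 3" using d3 d0 by (metis power_strict_mono real_sqrt_pow2 zero_le_numeral pos2)
  then have c1: "1 < c" unfolding c_def by simp
  have ind: "\<forall>g\<in>K. \<forall>v. c ^ k * (norm (\<nu> g v - v))\<^sup>2 \<le> (d * norm v)\<^sup>2" for k
  proof (induction k)
    case 0
    then show ?case using b by (simp add: power_mono)
  next
    case (Suc k)
    show ?case
    proof (intro ballI allI)
      fix g v assume g: "g \<in> K"
      have st: "c * (norm (\<nu> g v - v))\<^sup>2 \<le> (norm (\<nu> g (\<nu> g v) - v))\<^sup>2"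
        unfolding c_def using un g b d0 by (intro double_step) auto
      have "c ^ Suc k * (norm (\<nu> g v - v))\<^sup>2 = c ^ k * (c * (norm (\<nu> g v - v))\<^sup>2)" by simp
      also have "\<dots> \<le> c ^ k * (norm (\<nu> g (\<nu> g v) - v))\<^sup>2"
        using st c1 by (intro mult_left_mono) auto
      also have "\<dots> = c ^ k * (norm (\<nu> (m g g) v - v))\<^sup>2" using cl[OF g] by simp
      also have "\<dots> \<le> (d * norm v)\<^sup>2" using Suc cl[OF g] by blast
      finally show "c ^ Suc k * (norm (\<nu> g v - v))\<^sup>2 \<le> (d * norm v)\<^sup>2" .
    qed
  qed
  have "\<nu> g v = v" for v
  proof (rule ccontr)
    assume "\<nu> g v \<noteq> v"
    then have a: "0 < (norm (\<nu> g v - v))\<^sup>2" by simp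
    obtain k where "(d * norm v)\<^sup>2 / (norm (\<nu> g v - v))\<^sup>2 < c ^ k" using real_arch_pow[OF c1] by blast
    then have "(d * norm v)\<^sup>2 < c ^ k * (norm (\<nu> g v - v))\<^sup>2" using a by (simp add: divide_less_eq)
    moreover have "c ^ k * (norm (\<nu> g v - v))\<^sup>2 \<le> (d * norm v)\<^sup>2" using ind[of k] gK by blast
    ultimately show False by linarith
  qed
  then show ?thesis by auto
qed


lemma dist_comp:
  assumes "\<pi> ` carrier G = carrier G0"
  shows "map_dist G (f \<circ> \<pi>) (h \<circ> \<pi>) = map_dist G0 f h"
  unfolding map_dist_def using assms[symmetric] by (simp add: image_image)

lemma unitary_id: "unitary_op J id"
  unfolding unitary_op_def by (simp add: linear_id)

theorem lemma1p2:
  fixes G :: "('g, 'a) monoid_scheme" and G0 :: "('g0, 'b) monoid_scheme"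
    and \<pi> :: "'g \<Rightarrow> 'g0"
    and J :: "'h::{real_inner, complete_space} \<Rightarrow> 'h"
    and \<mu> :: "'g0 \<Rightarrow> 'h \<Rightarrow> 'h"
  assumes "group G" and "group G0"
    and "\<pi> \<in> hom G G0" and "\<pi> ` carrier G = carrier G0"
    and "complex_structure J"
    and "\<forall>x\<in>carrier G0. unitary_op J (\<mu> x)"
    and "\<mu> \<one>\<^bsub>G0\<^esub> = id"
  shows "defect G0 \<mu> = defect G (\<mu> \<circ> \<pi>)
    \<and> min (hom_dist G J (\<mu> \<circ> \<pi>)) (sqrt 3) = min (hom_dist G0 J \<mu>) (sqrt 3)"
proof -
  note G = assms(1) and G0 = assms(2) and hom = assms(3) and surj = assms(4) and mu = assms(6)
    and mu1 = assms(7)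
  interpret gh: group_hom G G0 \<pi>
    using G G0 hom by (simp add: group_hom_axioms_def group_hom_def)
  have mupi: "\<forall>x\<in>carrier G. unitary_op J ((\<mu> \<circ> \<pi>) x)" using mu by auto
  define F where "F q = onorm (\<lambda>v. \<mu> (fst q \<otimes>\<^bsub>G0\<^esub> snd q) v - \<mu> (fst q) (\<mu> (snd q) v))" for q
  have part1: "defect G0 \<mu> = defect G (\<mu> \<circ> \<pi>)"
  proof -
    have "defect G (\<mu> \<circ> \<pi>) = (SUP p\<in>carrier G \<times> carrier G. F (map_prod \<pi> \<pi> p))"
      unfolding defect_def F_def by (intro SUP_cong) auto
    also have "\<dots> = (SUP q\<in>map_prod \<pi> \<pi> ` (carrier G \<times> carrier G). F q)"
      by (simp add: image_image)
    also have "map_prod \<pi> \<pi> ` (carrier G \<times> carrier G) = carrier G0 \<times> carrier G0"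
      using surj by (simp add: map_prod_surj_on)
    finally show ?thesis unfolding defect_def F_def by simp
  qed
  define A where "A = {map_dist G (\<mu> \<circ> \<pi>) \<nu> | \<nu>. unitary_hom G J \<nu>}"
  define B where "B = {map_dist G0 \<mu> \<nu>0 | \<nu>0. unitary_hom G0 J \<nu>0}"
  have BA: "B \<subseteq> A"
  proof
    fix b assume "b \<in> B"
    then obtain \<nu>0 where h: "unitary_hom G0 J \<nu>0" and b: "b = map_dist G0 \<mu> \<nu>0"
      unfolding B_def by auto
    have "unitary_hom G J (\<nu>0 \<circ> \<pi>)" using h unfolding unitary_hom_def by auto
    moreover have "b = map_dist G (\<mu> \<circ> \<pi>) (\<nu>0 \<circ> \<pi>)" using b dist_comp[OF surj] by metis
    ultimately show "b \<in> A" unfolding A_def by blast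
  qed
  have AB: "a \<in> B" if aA: "a \<in> A" and a3: "a < sqrt 3" for a
  proof -
    obtain \<nu> where h: "unitary_hom G J \<nu>" and a: "a = map_dist G (\<mu> \<circ> \<pi>) \<nu>"
      using aA by (auto simp: A_def)
    have nu: "\<forall>x\<in>carrier G. unitary_op J (\<nu> x)" and nuh: "\<And>x y. x \<in> carrier G \<Longrightarrow> y \<in> carrier G \<Longrightarrow> \<nu> (x \<otimes>\<^bsub>G\<^esub> y) = \<nu> x \<circ> \<nu> y"
      using h unfolding unitary_hom_def by auto
    note md = md_facts[OF G mupi nu]
    define K where "K = {g \<in> carrier G. \<pi> g = \<one>\<^bsub>G0\<^esub>}"
    have bnd: "norm (\<nu> g v - v) \<le> a * norm v" if g: "g \<in> K" for g v
    proof -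
      have gc: "g \<in> carrier G" and pg: "\<pi> g = \<one>\<^bsub>G0\<^esub>" using g unfolding K_def by auto
      have o: "onorm (\<lambda>v. v - \<nu> g v) \<le> a" using md(3)[OF gc] pg mu1 a by (simp add: o_def)
      have bl: "bounded_linear (\<lambda>v. v - \<nu> g v)"
        using diff_onorm[OF unitary_id nu[rule_format, OF gc]] by simp
      have "norm (v - \<nu> g v) \<le> onorm (\<lambda>v. v - \<nu> g v) * norm v" by (rule onorm[OF bl])
      also have "\<dots> \<le> a * norm v" using o by (simp add: mult_right_mono)
      finally show ?thesis by (simp add: norm_minus_commute)
    qed
    have kil: "\<nu> g = id" if "g \<in> K" for g
    proof (rule kill[where K=K and m="\<lambda>x y. x \<otimes>\<^bsub>G\<^esub> y" and d=a])
      show "\<forall>x\<in>K. linear (\<nu> x) \<and> (\<forall>v. norm (\<nu> x v) = norm v)"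
        using nu unfolding K_def unitary_op_def by auto
      show "\<And>g. g \<in> K \<Longrightarrow> g \<otimes>\<^bsub>G\<^esub> g \<in> K \<and> \<nu> (g \<otimes>\<^bsub>G\<^esub> g) = \<nu> g \<circ> \<nu> g"
        unfolding K_def using nuh G0 by (auto simp: group.is_monoid)
      show "0 \<le> a" using md(2) a by (simp add: o_def)
    qed (use that bnd \<open>a < sqrt 3\<close> in auto)
    have well: "\<nu> g' = \<nu> g" if "g \<in> carrier G" "g' \<in> carrier G" "\<pi> g = \<pi> g'" for g g'
    proof -
      have k: "inv\<^bsub>G\<^esub> g \<otimes>\<^bsub>G\<^esub> g' \<in> K"
        unfolding K_def using that G0 by (auto simp: group.l_inv)
      have "g' = g \<otimes>\<^bsub>G\<^esub> (inv\<^bsub>G\<^esub> g \<otimes>\<^bsub>G\<^esub> g')"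
        using that G by (metis group.inv_closed group.is_monoid monoid.m_assoc group.r_inv monoid.l_one)
      then have "\<nu> g' = \<nu> g \<circ> \<nu> (inv\<^bsub>G\<^esub> g \<otimes>\<^bsub>G\<^esub> g')"
        using nuh that G by (metis group.inv_closed monoid.m_closed group.is_monoid)
      then show ?thesis using kil[OF k] by simp
    qed
    define \<nu>0 where "\<nu>0 h = \<nu> (SOME g. g \<in> carrier G \<and> \<pi> g = h)" for h
    have nu0: "\<nu>0 (\<pi> g) = \<nu> g" if "g \<in> carrier G" for g
    proof -
      have "\<exists>g'. g' \<in> carrier G \<and> \<pi> g' = \<pi> g" using that by blast
      then have "(SOME g'. g' \<in> carrier G \<and> \<pi> g' = \<pi> g) \<in> carrier G \<and> \<pi> (SOME g'. g' \<in> carrier G \<and> \<pi> g' = \<pi> g) = \<pi> g"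
        by (rule someI_ex)
      then show ?thesis unfolding \<nu>0_def using well that by metis
    qed
    have "unitary_hom G0 J \<nu>0"
      unfolding unitary_hom_def
    proof (intro conjI ballI)
      fix x assume "x \<in> carrier G0"
      then obtain g where "g \<in> carrier G" "x = \<pi> g" using surj by blast
      then show "unitary_op J (\<nu>0 x)" using nu nu0 by simp
    next
      fix x y assume "x \<in> carrier G0" "y \<in> carrier G0"
      then obtain g g' where g: "g \<in> carrier G" "x = \<pi> g" "g' \<in> carrier G" "y = \<pi> g'" using surj by blast
      then have "\<nu>0 (x \<otimes>\<^bsub>G0\<^esub> y) = \<nu>0 (\<pi> (g \<otimes>\<^bsub>G\<^esub> g'))" by simp
      also have "\<dots> = \<nu> (g \<otimes>\<^bsub>G\<^esub> g')" using g by (intro nu0) simp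
      also have "\<dots> = \<nu>0 x \<circ> \<nu>0 y" using g nuh nu0 by simp
      finally show "\<nu>0 (x \<otimes>\<^bsub>G0\<^esub> y) = \<nu>0 x \<circ> \<nu>0 y" .
    qed
    moreover have "map_dist G0 \<mu> \<nu>0 = a"
    proof -
      have "map_dist G0 \<mu> \<nu>0 = map_dist G (\<mu> \<circ> \<pi>) (\<nu>0 \<circ> \<pi>)" using dist_comp[OF surj] by metis
      also have "\<dots> = map_dist G (\<mu> \<circ> \<pi>) \<nu>" unfolding map_dist_def
        by (intro SUP_cong) (auto simp: nu0)
      finally show ?thesis using a by simp
    qed
    ultimately show "a \<in> B" unfolding B_def by blast
  qed
  have triv: "unitary_hom G0 J (\<lambda>_. id)" unfolding unitary_hom_def using unitary_id by auto
  have Bne: "B \<noteq> {}" using triv unfolding B_def by blast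
  have Anonneg: "\<forall>a\<in>A. 0 \<le> a"
  proof
    fix a assume "a \<in> A"
    then obtain \<nu> where h: "unitary_hom G J \<nu>" and a: "a = map_dist G (\<mu> \<circ> \<pi>) \<nu>"
      unfolding A_def by auto
    have "\<forall>x\<in>carrier G. unitary_op J (\<nu> x)" using h unfolding unitary_hom_def by auto
    then show "0 \<le> a" using md_facts(2)[OF G mupi] a by (simp add: o_def)
  qed
  have Bnonneg: "\<forall>b\<in>B. 0 \<le> b" using BA Anonneg by auto
  have bA: "bdd_below A" using Anonneg by (intro bdd_belowI[where m=0]) auto
  have bB: "bdd_below B" using Bnonneg by (intro bdd_belowI[where m=0]) auto
  have Ane: "A \<noteq> {}" using Bne BA by auto
  have le1: "Inf A \<le> Inf B" by (rule cInf_superset_mono[OF Bne bA BA])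
  have le2: "min (Inf B) (sqrt 3) \<le> min (Inf A) (sqrt 3)"
  proof (cases "Inf A < sqrt 3")
    case True
    have "Inf B \<le> Inf A"
    proof (rule ccontr)
      assume "\<not> Inf B \<le> Inf A"
      then have "Inf A < min (Inf B) (sqrt 3)" using True by simp
      then obtain a where a: "a \<in> A" "a < min (Inf B) (sqrt 3)"
        using cInf_less_iff[OF Ane bA] by blast
      then have "a \<in> B" using AB by simp
      then have "Inf B \<le> a" using bB by (rule cInf_lower)
      then show False using a by simp
    qed
    then show ?thesis by simp
  next
    case False
    then show ?thesis by simp
  qed
  have "min (hom_dist G J (\<mu> \<circ> \<pi>)) (sqrt 3) = min (hom_dist G0 J \<mu>) (sqrt 3)"
    unfolding hom_dist_def A_def[symmetric] B_def[symmetric] using le1 le2 by linarith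
  with part1 show ?thesis by simp
qed

end
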